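(* Let $R\in\mathbb{C}[z]$ be a nonzero polynomial and $m\ge0$ an integer. For $a$ in the annulus $|q|^2<|a|<1$ let $M(a)$ be the $(m+1)\times(m+1)$ matrix with entries $M(a)_{ij}=\oint_{|z|=1}R(z)\,w_a(z)\,z^{i+j}\,dz$, $0\le i,j\le m$. Then there is a nonzero Laurent polynomial $D\in\mathbb{C}[a,a^{-1}]$ such that $\det M(a)=D(a)$ for all $a$ with $|q|^2<|a|<1$.
   Context: Let $q\in\mathbb{C}$ with $0<|q|<1$. For $a\in\mathbb{C}$ with $|q|^2<|a|<1$ put $b=q^2a^{-1}$, and let $w_a$ be a meromorphic function on $\mathbb{C}\setminus\{0\}$ with $w_a(q^2x)=w_a(x)$ whose only poles are simple poles at the points $q^{2k}a$ with residue $q^{2k}a$ and at the points $q^{2k}b$ with residue $-q^{2k}b$ ($k\in\mathbb{Z}$); such $w_a$ exists and is unique up to an additive constant (the entries of $M(a)$ do not depend on this constant). *)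

theory Defs
  imports "HOL-Complex_Analysis.Complex_Analysis" "Jordan_Normal_Form.Determinant"
begin

definition w_spec :: "complex \<Rightarrow> complex \<Rightarrow> (complex \<Rightarrow> complex) \<Rightarrow> bool" where
  "w_spec q a w \<longleftrightarrow>
     (let b = q\<^sup>2 / a;
          PA = {q powi (2*k) * a | k::int. True};
          PB = {q powi (2*k) * b | k::int. True}
      in w meromorphic_on (- {0}) \<and>
         w holomorphic_on (- {0} - (PA \<union> PB)) \<and>
         (\<forall>x \<in> - {0} - (PA \<union> PB). w (q\<^sup>2 * x) = w x) \<and>
         (\<forall>k::int. is_pole w (q powi (2*k) * a) \<and> zorder w (q powi (2*k) * a) = -1 \<and>
                   residue w (q powi (2*k) * a) = q powi (2*k) * a) \<and>
         (\<forall>k::int. is_pole w (q powi (2*k) * b) \<and> zorder w (q powi (2*k) * b) = -1 \<and>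
                   residue w (q powi (2*k) * b) = - (q powi (2*k) * b)))"

definition moment_matrix :: "complex poly \<Rightarrow> (complex \<Rightarrow> complex) \<Rightarrow> nat \<Rightarrow> complex mat" where
  "moment_matrix R w m = mat (Suc m) (Suc m)
     (\<lambda>(i, j). contour_integral (circlepath 0 1) (\<lambda>z. poly R z * w z * z ^ (i + j)))"

end

theory Submission
  imports Defs
begin


lemma simple_pole_limit:
  fixes f :: "complex \<Rightarrow> complex"
  assumes S: "open S" "p \<in> S" and holo: "f holomorphic_on S - {p}"
    and pole: "is_pole f p" and ord: "zorder f p = -1"
  shows "\<exists>c. ((\<lambda>z. f z - residue f p / (z - p)) \<longlongrightarrow> c) (at p)"
proof -
  define g where "g = zor_poly f p"
  obtain r where r: "r > 0" "cball p r \<subseteq> S" "g holomorphic_on cball p r"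
    "\<forall>z\<in>cball p r - {p}. f z = g z / (z - p) ^ nat (- zorder f p)"
    using zorder_exist_pole[OF holo S pole] unfolding g_def by blast
  have fz: "f z = g z / (z - p)" if "z \<in> ball p r - {p}" for z
    using r(4) that ord by auto
  have iso: "isolated_singularity_at f p"
    unfolding isolated_singularity_at_def
  proof (intro exI conjI)
    show "r > 0" by fact
    have "f holomorphic_on ball p r - {p}"
      by (rule holomorphic_on_subset[OF holo]) (use r(2) in auto)
    then show "f analytic_on ball p r - {p}"
      by (simp add: analytic_on_open open_Diff)
  qed
  have res: "residue f p = g p"
    unfolding g_def by (rule residue_simple_pole[OF iso pole ord])
  have "g holomorphic_on ball p r" using r(3) by (rule holomorphic_on_subset) auto
  then have "g field_differentiable at p"
    using r(1) by (intro holomorphic_on_imp_differentiable_at) auto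
  then have "(g has_field_derivative deriv g p) (at p)"
    by (simp add: field_differentiable_derivI)
  then have lim: "((\<lambda>y. (g y - g p) / (y - p)) \<longlongrightarrow> deriv g p) (at p)"
    by (simp add: has_field_derivative_iff)
  have ev: "eventually (\<lambda>z. z \<in> ball p r - {p}) (at p)"
    using r(1) by (intro eventually_at_in_open) auto
  have "eventually (\<lambda>z. (g z - g p) / (z - p) = f z - residue f p / (z - p)) (at p)"
    using ev by eventually_elim (simp add: fz res diff_divide_distrib)
  from tendsto_cong[OF this] lim show ?thesis by blast
qed

lemma powi_ge1:
  fixes s :: real
  assumes "0 < s" "s < 1" "k \<ge> 1"
  shows "s powi k \<le> s"
proof -
  define n where "n = nat k"
  have n: "k = int n" "n \<ge> 1" using assms(3) unfolding n_def by auto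
  have "s ^ n \<le> s ^ 1" using assms n by (intro power_decreasing) auto
  then show ?thesis using n by simp
qed

lemma powi_lem1:
  fixes s :: real
  assumes "0 < s" "s < 1" "k \<le> -1"
  shows "s powi k \<ge> inverse s"
proof -
  have "s powi (-k) \<le> s" using assms by (intro powi_ge1) auto
  moreover have "0 < s powi (-k)" using assms by simp
  ultimately have "inverse s \<le> inverse (s powi (-k))" by (intro le_imp_inverse_le) auto
  then show ?thesis by (simp add: power_int_minus)
qed

lemma scaled_circle_integral:
  fixes c :: complex
  assumes "(f has_contour_integral I) ((*) c \<circ> circlepath 0 1)"
  shows "((\<lambda>x. c * f (c * x)) has_contour_integral I) (circlepath 0 1)"
proof -
  have vd: "vector_derivative ((*) c \<circ> circlepath 0 1) (at x) = c * vector_derivative (circlepath 0 1) (at x)" for x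
  proof -
    note h0 = has_vector_derivative_circlepath[of 0 1 x UNIV]
    have "((\<lambda>x. c * circlepath 0 1 x) has_vector_derivative c * vector_derivative (circlepath 0 1) (at x)) (at x)"
      unfolding vector_derivative_at[OF h0] by (rule has_vector_derivative_mult_right[OF h0])
    then show ?thesis
      by (simp add: o_def vector_derivative_at)
  qed
  have e: "(\<lambda>x. f (((*) c \<circ> circlepath 0 1) x) * (c * vector_derivative (circlepath 0 1) (at x)))
     = (\<lambda>x. (c * f (c * circlepath 0 1 x)) * vector_derivative (circlepath 0 1) (at x))"
    by (rule ext) (simp add: o_def)
  show ?thesis using assms unfolding has_contour_integral vd e .
qed

lemma circ_int:
  fixes q a :: complex and w :: "complex \<Rightarrow> complex" and n :: nat
  assumes q0: "0 < norm q" and q1: "norm q < 1" and a1: "(norm q)\<^sup>2 < norm a" and a2: "norm a < 1"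
    and aq: "a\<^sup>2 \<noteq> q\<^sup>2" and ws: "w_spec q a w"
  shows "((\<lambda>z. w z * z ^ n) has_contour_integral
           (2 * of_real pi * \<i> * (a ^ (n+1) - (q\<^sup>2 / a) ^ (n+1)) / (1 - (q\<^sup>2) ^ (n+1)))) (circlepath 0 1)"
proof -
  define t where "t = q\<^sup>2"
  define b where "b = t / a"
  define s where "s = (norm q)\<^sup>2"
  have s0: "0 < s" using q0 by (simp add: s_def)
  have s1: "s < 1" using q0 q1 by (simp add: s_def power_less_one_iff)
  have tn: "norm t = s" by (simp add: t_def s_def norm_power)
  have t0: "t \<noteq> 0" using tn s0 by auto
  have as: "s < norm a" using a1 by (simp add: s_def)
  have a0: "a \<noteq> 0"
  proof
    assume "a = 0" with as s0 show False by simp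
  qed
  have nb: "norm b = s / norm a" by (simp add: b_def norm_divide tn)
  have "s * norm a < s * 1" using s0 a2 by (intro mult_strict_left_mono) auto
  then have b1: "s < norm b" using as s0 a0 by (simp add: nb less_divide_eq)
  have b2: "norm b < 1" using as s0 a0 by (simp add: nb divide_less_eq_1_pos)
  have b0: "b \<noteq> 0" using b1 s0 by auto
  have ab: "a \<noteq> b"
  proof
    assume "a = b"
    then have "a * a = t" using a0 by (simp add: b_def field_simps)
    then show False using aq by (simp add: t_def power2_eq_square)
  qed
  define m1 where "m1 = max (norm a) (norm b)"
  define m2 where "m2 = min (norm a) (norm b)"
  define r1 where "r1 = s * m1"
  define r2 where "r2 = m2 / s"
  have m1: "m1 < 1" "norm a \<le> m1" "norm b \<le> m1" using a2 b2 by (auto simp: m1_def)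
  have m2: "s < m2" "m2 \<le> norm a" "m2 \<le> norm b" using as b1 by (auto simp: m2_def)
  have r1: "0 < r1" "r1 < s" using s0 m1 m2 as
    by (auto simp: r1_def intro!: mult_pos_pos)
  have "s * m1 < s * 1" using s0 m1 by (intro mult_strict_left_mono) auto
  then have r1': "r1 < s" by (simp add: r1_def)
  have r2: "1 < r2" using m2 s0 by (simp add: r2_def less_divide_eq)
  define \<Omega> where "\<Omega> = ball 0 r2 - cball (0::complex) r1"
  have inO: "z \<in> \<Omega> \<longleftrightarrow> r1 < norm z \<and> norm z < r2" for z
    by (auto simp: \<Omega>_def)
  have oO: "open \<Omega>" by (simp add: \<Omega>_def open_Diff)
  define PA where "PA = {q powi (2*k) * a | k::int. True}"
  define PB where "PB = {q powi (2*k) * b | k::int. True}"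
  have W: "w holomorphic_on (- {0} - (PA \<union> PB))"
     "\<forall>x \<in> - {0} - (PA \<union> PB). w (q\<^sup>2 * x) = w x"
     "\<forall>k::int. is_pole w (q powi (2*k) * a) \<and> zorder w (q powi (2*k) * a) = -1 \<and>
                   residue w (q powi (2*k) * a) = q powi (2*k) * a"
     "\<forall>k::int. is_pole w (q powi (2*k) * b) \<and> zorder w (q powi (2*k) * b) = -1 \<and>
                   residue w (q powi (2*k) * b) = - (q powi (2*k) * b)"
    using ws unfolding w_spec_def Let_def PA_def PB_def b_def t_def by blast+
  have pa: "is_pole w a" "zorder w a = -1" "residue w a = a" using W(3)[rule_format, of 0] by auto
  have pb: "is_pole w b" "zorder w b = -1" "residue w b = - b" using W(4)[rule_format, of 0] by auto
  have nq: "norm (q powi (2*k)) = s powi k" for k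
    by (simp add: norm_power_int s_def power_int_mult norm_power)
  have key: "k = 0" if c: "c \<in> {a,b}" and z: "q powi (2*k) * c \<in> \<Omega>" for c k
  proof -
    have nz: "norm (q powi (2*k) * c) = s powi k * norm c" by (simp add: norm_mult nq)
    have mc: "norm c \<le> m1" "m2 \<le> norm c" using c m1 m2 by auto
    have ks: "0 < s powi k" using s0 by simp
    show ?thesis
    proof (rule ccontr)
      assume "k \<noteq> 0"
      then consider "k \<ge> 1" | "k \<le> -1" by linarith
      then show False
      proof cases
        case 1
        have "s powi k * norm c \<le> s * m1"
          using powi_ge1[OF s0 s1 1] mc ks by (intro mult_mono) auto
        then show False using z nz by (simp add: inO r1_def)
      next
        case 2
        have "inverse s * m2 \<le> s powi k * norm c"
          using powi_lem1[OF s0 s1 2] mc ks m2 s0 by (intro mult_mono) auto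
        moreover have "inverse s * m2 = r2" by (simp add: r2_def field_simps)
        ultimately show False using z nz by (simp add: inO)
      qed
    qed
  qed
  have aO: "a \<in> \<Omega>" and bO: "b \<in> \<Omega>" using r1' r2 as b1 a2 b2 by (auto simp: inO)
  have sub: "\<Omega> - {a,b} \<subseteq> - {0} - (PA \<union> PB)"
  proof
    fix z assume z: "z \<in> \<Omega> - {a,b}"
    have "z \<noteq> 0" using z r1 by (auto simp: inO)
    moreover have "z \<notin> PA"
    proof
      assume "z \<in> PA"
      then obtain k where k: "z = q powi (2*k) * a" by (auto simp: PA_def)
      then have "k = 0" using key[of a k] z by auto
      then show False using k z by simp
    qed
    moreover have "z \<notin> PB"
    proof
      assume "z \<in> PB"
      then obtain k where k: "z = q powi (2*k) * b" by (auto simp: PB_def)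
      then have "k = 0" using key[of b k] z by auto
      then show False using k z by simp
    qed
    ultimately show "z \<in> - {0} - (PA \<union> PB)" by auto
  qed
  have wh: "w holomorphic_on \<Omega> - {a,b}" by (rule holomorphic_on_subset[OF W(1) sub])
  have sph1: "sphere 0 1 \<subseteq> \<Omega> - {a,b}" using r1' r1 s1 r2 a2 b2 by (auto simp: inO)
  have sphs: "sphere 0 s \<subseteq> \<Omega> - {a,b}" using r1' r2 s1 as b1 by (auto simp: inO)
  define U where "U z = w z - a / (z - a) + b / (z - b)" for z
  have oOab: "open (\<Omega> - {a,b})" using oO by (intro open_Diff) auto
  have Uh: "U holomorphic_on \<Omega> - {a,b}"
    unfolding U_def using wh by (intro holomorphic_intros) auto
  have limA: "\<exists>c. (U \<longlongrightarrow> c) (at a)"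
  proof -
    have "w holomorphic_on (\<Omega> - {b}) - {a}" using wh by (simp add: Diff_insert2[symmetric] insert_commute)
    then obtain c where c: "((\<lambda>z. w z - residue w a / (z - a)) \<longlongrightarrow> c) (at a)"
      using simple_pole_limit[of "\<Omega> - {b}" a w] oO aO ab pa by (auto simp: open_Diff)
    have "((\<lambda>z. b / (z - b)) \<longlongrightarrow> b / (a - b)) (at a)"
      using ab by (intro tendsto_intros) auto
    from tendsto_add[OF c this] show ?thesis unfolding U_def pa(3) by blast
  qed
  have limB: "\<exists>c. (U \<longlongrightarrow> c) (at b)"
  proof -
    have "w holomorphic_on (\<Omega> - {a}) - {b}" using wh by (simp add: Diff_insert2[symmetric])
    then obtain c where c: "((\<lambda>z. w z - residue w b / (z - b)) \<longlongrightarrow> c) (at b)"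
      using simple_pole_limit[of "\<Omega> - {a}" b w] oO bO ab pb by (auto simp: open_Diff)
    have "((\<lambda>z. a / (z - a)) \<longlongrightarrow> a / (b - a)) (at b)"
      using ab by (intro tendsto_intros) auto
    from tendsto_diff[OF c this] have "((\<lambda>z. w z - - b / (z - b) - a / (z - a)) \<longlongrightarrow> c - a / (b - a)) (at b)"
      unfolding pb(3) .
    moreover have "(\<lambda>z. w z - - b / (z - b) - a / (z - a)) = U"
      by (rule ext) (simp add: U_def)
    ultimately show ?thesis by auto
  qed
  define RU where "RU = remove_sings U"
  have RUa: "RU analytic_on \<Omega>"
    unfolding analytic_on_analytic_at[of RU \<Omega>]
  proof
    fix z assume z: "z \<in> \<Omega>"
    show "RU analytic_on {z}"
    proof (cases "z \<in> {a,b}")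
      case True
      have iso: "isolated_singularity_at U z"
      proof -
        have "U holomorphic_on (\<Omega> - ({a,b} - {z})) - {z}" using Uh by (rule holomorphic_on_subset) auto
        moreover have "open (\<Omega> - ({a,b} - {z}))" using oO by (intro open_Diff finite_imp_closed) auto
        ultimately show ?thesis using z by (intro isolated_singularity_at_holomorphic[of U "\<Omega> - ({a,b} - {z})" z]) auto
      qed
      from True have "z = a \<or> z = b" by simp
      then obtain c where "(U \<longlongrightarrow> c) (at z)" using limA limB by blast
      then show ?thesis unfolding RU_def using iso by (intro remove_sings_analytic_at)
    next
      case False
      have "U analytic_on {z}"
        using z False by (intro holomorphic_on_imp_analytic_at[OF Uh oOab]) auto
      then show ?thesis unfolding RU_def by (rule remove_sings_analytic_on)
    qed
  qed
  have RUh: "RU holomorphic_on \<Omega>" using RUa by (rule analytic_imp_holomorphic)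
  have RUeq: "RU z = U z" if "z \<in> \<Omega> - {a,b}" for z
  proof -
    have "U analytic_on {z}"
      using that by (intro holomorphic_on_imp_analytic_at[OF Uh oOab])
    then show ?thesis unfolding RU_def by (rule remove_sings_at_analytic)
  qed
  define F where "F z = RU z * z ^ n" for z
  have Fh: "F holomorphic_on \<Omega>" unfolding F_def using RUh by (intro holomorphic_intros)
  define G where "G z = w z * z ^ n" for z
  have FG: "F z = G z - (a * z ^ n) / (z - a) + (b * z ^ n) / (z - b)" if "z \<in> \<Omega> - {a,b}" for z
    using that by (simp add: F_def G_def RUeq U_def algebra_simps add_divide_distrib diff_divide_distrib)
  define \<gamma> where "\<gamma> = circlepath (0::complex) 1"
  define h where "h = (*) t \<circ> \<gamma>"
  have pg: "path_image \<gamma> = sphere 0 1" by (simp add: \<gamma>_def)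
  have ph: "path_image h \<subseteq> sphere 0 s"
    by (auto simp: h_def pg path_image_compose norm_mult tn)
  have vg: "valid_path \<gamma>" by (simp add: \<gamma>_def)
  have vh: "valid_path h" unfolding h_def
    by (rule valid_path_compose_holomorphic[OF vg _ open_UNIV]) (auto intro: holomorphic_intros)
  have lh: "pathfinish h = pathstart h"
    by (simp add: h_def pathfinish_compose pathstart_compose \<gamma>_def)
  have lg: "pathfinish \<gamma> = pathstart \<gamma>" by (simp add: \<gamma>_def)
  have gexp: "\<gamma> x = exp (2 * of_real pi * \<i> * of_real x)" for x
    by (simp add: \<gamma>_def circlepath)
  define L where "L = Ln t"
  have eL: "exp L = t" using t0 by (simp add: L_def)
  have ReL: "Re L = ln s" using t0 by (simp add: L_def tn)
  define H where "H p = exp (of_real (fst p) * L) * exp (2 * of_real pi * \<i> * of_real (snd p))" for p :: "real \<times> real"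
  have hom: "homotopic_loops \<Omega> \<gamma> h"
    unfolding homotopic_loops
  proof (intro exI conjI)
    show "continuous_on ({0..1} \<times> {0..1}) H" unfolding H_def by (intro continuous_intros)
    show "H \<in> {0..1} \<times> {0..1} \<rightarrow> \<Omega>"
    proof
      fix p assume p: "p \<in> {0..1::real} \<times> {0..1::real}"
      have nH: "norm (H p) = exp (fst p * ln s)"
        by (simp add: H_def norm_mult ReL)
      have ls: "ln s < 0" using s0 s1 by simp
      have "fst p * ln s \<le> 0" using p ls by (auto intro: mult_nonneg_nonpos)
      then have e1: "exp (fst p * ln s) \<le> 1" by simp
      have "ln s \<le> fst p * ln s"
      proof -
        have "(1 - fst p) * ln s \<le> 0" using p ls by (auto intro: mult_nonneg_nonpos)
        then show ?thesis by (simp add: algebra_simps)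
      qed
      then have "exp (ln s) \<le> exp (fst p * ln s)" by simp
      then have e2: "s \<le> exp (fst p * ln s)" using s0 by simp
      have "r1 < norm (H p)" "norm (H p) < r2" using nH r1' r2 e1 e2 by linarith+
      then show "H p \<in> \<Omega>" by (simp add: inO)
    qed
    show "\<forall>x\<in>{0..1}. H (0, x) = \<gamma> x" by (simp add: H_def gexp)
    show "\<forall>x\<in>{0..1}. H (1, x) = h x" by (simp add: H_def gexp h_def eL)
    show "\<forall>u\<in>{0..1}. pathfinish (H \<circ> Pair u) = pathstart (H \<circ> Pair u)"
      by (simp add: H_def pathfinish_def pathstart_def)
  qed
  have Feq: "contour_integral \<gamma> F = contour_integral h F"
    using Cauchy_theorem_homotopic[of False \<Omega> \<gamma> h F] hom oO Fh vg vh by simp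
  define c where "c = 2 * of_real pi * \<i>"
  have Gh: "G holomorphic_on \<Omega> - {a,b}" unfolding G_def using wh by (intro holomorphic_intros)
  have Gi: "G contour_integrable_on \<gamma>"
    by (rule contour_integrable_holomorphic_simple[OF Gh oOab vg]) (use pg sph1 in auto)
  define I where "I = contour_integral \<gamma> G"
  have hasI: "(G has_contour_integral I) \<gamma>" unfolding I_def by (rule has_contour_integral_integral[OF Gi])
  have Gi2: "G contour_integrable_on h"
    by (rule contour_integrable_holomorphic_simple[OF Gh oOab vh]) (use ph sphs in auto)
  define J where "J = contour_integral h G"
  have hasJ: "(G has_contour_integral J) h" unfolding J_def by (rule has_contour_integral_integral[OF Gi2])
  have "((\<lambda>x. t * G (t * x)) has_contour_integral J) \<gamma>"
    using hasJ unfolding h_def \<gamma>_def by (rule scaled_circle_integral)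
  moreover have "((\<lambda>x. t * G (t * x)) has_contour_integral (t^(n+1) * I)) \<gamma>"
  proof (rule has_contour_integral_eq[OF has_contour_integral_lmul[OF hasI]])
    fix x assume "x \<in> path_image \<gamma>"
    then have x: "x \<in> - {0} - (PA \<union> PB)" using pg sph1 sub by auto
    have "w (t * x) = w x" using W(2) x by (simp add: t_def)
    then show "t^(n+1) * G x = t * G (t*x)" by (simp add: G_def power_mult_distrib)
  qed
  ultimately have JI: "J = t^(n+1) * I" by (rule has_contour_integral_unique)
  have A1: "((\<lambda>z. (a * z^n) / (z - a)) has_contour_integral (c * (a * a^n))) \<gamma>"
    unfolding \<gamma>_def c_def by (rule Cauchy_integral_circlepath_simple) (auto intro!: holomorphic_intros simp: a2)
  have B1: "((\<lambda>z. (b * z^n) / (z - b)) has_contour_integral (c * (b * b^n))) \<gamma>"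
    unfolding \<gamma>_def c_def by (rule Cauchy_integral_circlepath_simple) (auto intro!: holomorphic_intros simp: b2)
  have A2: "((\<lambda>z. (a * z^n) / (z - a)) has_contour_integral 0) h"
  proof (rule Cauchy_theorem_convex_simple[OF _ convex_ball vh _ lh])
    show "(\<lambda>z. (a*z^n)/(z-a)) holomorphic_on ball 0 (norm a)" by (intro holomorphic_intros) auto
    show "path_image h \<subseteq> ball 0 (norm a)" using ph as by auto
  qed
  have B2: "((\<lambda>z. (b * z^n) / (z - b)) has_contour_integral 0) h"
  proof (rule Cauchy_theorem_convex_simple[OF _ convex_ball vh _ lh])
    show "(\<lambda>z. (b*z^n)/(z-b)) holomorphic_on ball 0 (norm b)" by (intro holomorphic_intros) auto
    show "path_image h \<subseteq> ball 0 (norm b)" using ph b1 by auto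
  qed
  have F1: "(F has_contour_integral (I - c*(a*a^n) + c*(b*b^n))) \<gamma>"
  proof (rule has_contour_integral_eq[OF has_contour_integral_add[OF has_contour_integral_diff[OF hasI A1] B1]])
    fix x assume "x \<in> path_image \<gamma>"
    then have "x \<in> \<Omega> - {a,b}" using pg sph1 by auto
    then show "G x - a * x ^ n / (x - a) + b * x ^ n / (x - b) = F x" by (simp add: FG)
  qed
  have F2: "(F has_contour_integral (J - 0 + 0)) h"
  proof (rule has_contour_integral_eq[OF has_contour_integral_add[OF has_contour_integral_diff[OF hasJ A2] B2]])
    fix x assume "x \<in> path_image h"
    then have "x \<in> \<Omega> - {a,b}" using ph sphs by auto
    then show "G x - a * x ^ n / (x - a) + b * x ^ n / (x - b) = F x" by (simp add: FG)
  qed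
  have eq: "I - c*(a*a^n) + c*(b*b^n) = t^(n+1) * I"
    using Feq contour_integral_unique[OF F1] contour_integral_unique[OF F2] JI by simp
  have "norm (t^(n+1)) = s^(n+1)" by (simp only: norm_power tn)
  also have "\<dots> < 1" using s0 s1 by (simp only: power_less_one_iff) simp
  finally have "norm (t^(n+1)) < 1" .
  then have tn1: "1 - t^(n+1) \<noteq> 0" by auto
  have "I * (1 - t^(n+1)) = c * (a^(n+1) - b^(n+1))" using eq by (simp add: algebra_simps)
  then have "I = c * (a^(n+1) - b^(n+1)) / (1 - t^(n+1))" using tn1 by (simp add: field_simps)
  moreover have "(\<lambda>z. w z * z ^ n) = G" by (rule ext) (simp add: G_def)
  ultimately show ?thesis using hasI by (simp add: c_def b_def t_def \<gamma>_def)
qed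



lemma cauchy_nonsing:
  fixes x y :: "nat \<Rightarrow> complex" and K :: complex
  assumes K: "K \<noteq> 0" and xi: "inj_on x {0..<n}" and yi: "inj_on y {0..<n}" and y0: "\<And>j. j < n \<Longrightarrow> y j \<noteq> 0"
    and nz: "\<And>i j. i < n \<Longrightarrow> j < n \<Longrightarrow> 1 - x i * y j \<noteq> 0"
  shows "det (mat n n (\<lambda>(i,j). K / (1 - x i * y j))) \<noteq> 0"
proof
  define A where "A = mat n n (\<lambda>(i,j). K / (1 - x i * y j))"
  assume "det (mat n n (\<lambda>(i,j). K / (1 - x i * y j))) = 0"
  then have "det A = 0" by (simp add: A_def)
  then obtain v where v: "v \<in> carrier_vec n" "v \<noteq> 0\<^sub>v n" "A *\<^sub>v v = 0\<^sub>v n"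
    using det_0_iff_vec_prod_zero_field[of A n] by (auto simp: A_def)
  have eqs: "(\<Sum>j\<in>{0..<n}. K / (1 - x i * y j) * vec_index v j) = 0" if i: "i < n" for i
  proof -
    have "(A *\<^sub>v v) $ i = 0" using v(3) i by simp
    then show ?thesis using i v(1) by (simp add: A_def scalar_prod_def)
  qed
  define Q where "Q j = (\<Prod>k\<in>{0..<n}-{j}. [:1, - y k:])" for j
  define N where "N = (\<Sum>j\<in>{0..<n}. Polynomial.smult (vec_index v j) (Q j))"
  have polyN: "poly N z = (\<Sum>j\<in>{0..<n}. vec_index v j * (\<Prod>k\<in>{0..<n}-{j}. 1 - y k * z))" for z
    by (simp add: N_def Q_def poly_sum poly_prod algebra_simps)
  have degQ: "degree (Q j) \<le> n - 1" if "j < n" for j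
  proof -
    have "degree (Q j) \<le> sum (degree \<circ> (\<lambda>k. [:1, - y k:])) ({0..<n}-{j})"
      unfolding Q_def by (rule degree_prod_sum_le) simp
    also have "\<dots> \<le> sum (\<lambda>k. 1) ({0..<n}-{j})"
      by (intro sum_mono) simp
    also have "\<dots> = n - 1" using that by simp
    finally show ?thesis .
  qed
  have degN: "degree N \<le> n - 1"
    unfolding N_def by (rule degree_sum_le) (use degQ in \<open>auto intro: order_trans[OF degree_smult_le]\<close>)
  have n0: "n > 0"
  proof (rule ccontr)
    assume "\<not> n > 0"
    then have "n = 0" by simp
    then show False using v(1,2) by auto
  qed
  have roots: "poly N (x i) = 0" if i: "i < n" for i
  proof -
    define P where "P = (\<Prod>k\<in>{0..<n}. 1 - x i * y k)"
    have rem: "(\<Prod>k\<in>{0..<n}-{j}. 1 - y k * x i) * (1 - x i * y j) = P" if j: "j < n" for j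
    proof -
      have "P = (1 - x i * y j) * (\<Prod>k\<in>{0..<n}-{j}. 1 - x i * y k)"
        unfolding P_def using j by (intro prod.remove) auto
      then show ?thesis by (simp add: mult.commute)
    qed
    have "(\<Sum>j\<in>{0..<n}. K * (vec_index v j * (\<Prod>k\<in>{0..<n}-{j}. 1 - y k * x i)))
        = (\<Sum>j\<in>{0..<n}. P * (K / (1 - x i * y j) * vec_index v j))"
    proof (rule sum.cong[OF refl])
      fix j assume j: "j \<in> {0..<n}"
      have "P * (K / (1 - x i * y j) * vec_index v j) = (\<Prod>k\<in>{0..<n}-{j}. 1 - y k * x i) * (1 - x i * y j) * (K / (1 - x i * y j) * vec_index v j)"
        using rem[of j] j by simp
      also have "\<dots> = K * (vec_index v j * (\<Prod>k\<in>{0..<n}-{j}. 1 - y k * x i))"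
        using nz[of i j] i j by (simp add: field_simps)
      finally show "K * (vec_index v j * (\<Prod>k\<in>{0..<n}-{j}. 1 - y k * x i)) = P * (K / (1 - x i * y j) * vec_index v j)" by simp
    qed
    also have "\<dots> = P * (\<Sum>j\<in>{0..<n}. K / (1 - x i * y j) * vec_index v j)" by (simp add: sum_distrib_left)
    also have "\<dots> = 0" using eqs[OF i] by simp
    finally have "K * poly N (x i) = 0" by (simp add: polyN sum_distrib_left)
    then show ?thesis using K by simp
  qed
  have N0: "N = 0"
  proof (rule ccontr)
    assume N: "N \<noteq> 0"
    have "x ` {0..<n} \<subseteq> {z. poly N z = 0}" using roots by auto
    then have "card (x ` {0..<n}) \<le> card {z. poly N z = 0}"
      by (intro card_mono poly_roots_finite N)
    also have "\<dots> \<le> degree N" by (rule card_poly_roots_bound[OF N])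
    also have "\<dots> \<le> n - 1" by (rule degN)
    finally show False using card_image[OF xi] n0 by simp
  qed
  have vj: "vec_index v j = 0" if j: "j < n" for j
  proof -
    define f where "f j' = vec_index v j' * (\<Prod>k\<in>{0..<n}-{j'}. 1 - y k * (1 / y j))" for j'
    have z: "f j' = 0" if "j' \<in> {0..<n} - {j}" for j'
    proof -
      have "(\<Prod>k\<in>{0..<n}-{j'}. 1 - y k * (1 / y j)) = 0"
        using that j y0[OF j] by (intro prod_zero) auto
      then show ?thesis by (simp add: f_def)
    qed
    have "0 = poly N (1 / y j)" by (simp add: N0)
    also have "\<dots> = sum f {0..<n}" unfolding polyN f_def ..
    also have "\<dots> = f j + sum f ({0..<n} - {j})" using j by (intro sum.remove) auto
    also have "sum f ({0..<n} - {j}) = 0" using z by (intro sum.neutral) auto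
    finally have fj: "f j = 0" by simp
    have "(\<Prod>k\<in>{0..<n}-{j}. 1 - y k * (1 / y j)) \<noteq> 0"
    proof
      assume pz: "(\<Prod>k\<in>{0..<n}-{j}. 1 - y k * (1 / y j)) = 0"
      have fin: "finite ({0..<n}-{j})" by simp
      have "\<exists>k\<in>{0..<n}-{j}. 1 - y k * (1 / y j) = 0"
        using prod_zero_iff[OF fin, of "\<lambda>k. 1 - y k * (1 / y j)"] pz by blast
      then obtain k where k: "k \<in> {0..<n}-{j}" "1 - y k * (1 / y j) = 0" by blast
      then have "y k = y j" using y0[OF j] by (simp add: field_simps)
      then show False using yi k j by (auto dest: inj_onD)
    qed
    then show ?thesis using fj unfolding f_def mult_eq_0_iff by blast
  qed
  have "v = 0\<^sub>v n" using v(1) vj by (intro eq_vecI) auto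
  then show False using v(2) by simp
qed

lemma laurent_form:
  fixes D :: "complex poly" and S :: nat
  assumes D0: "coeff D 0 \<noteq> 0"
  shows "\<exists>N::nat. \<exists>c::int \<Rightarrow> complex. (\<exists>k\<in>{- int N..int N}. c k \<noteq> 0) \<and>
           (\<forall>a. a \<noteq> 0 \<longrightarrow> a ^ S * poly D (1 / a) = (\<Sum>k = - int N..int N. c k * a powi k))"
proof -
  define N where "N = S + degree D"
  define c where "c k = (if k \<le> int S then coeff D (nat (int S - k)) else 0)" for k :: int
  define g where "g i = int S - int i" for i :: nat
  have cS: "c (int S) \<noteq> 0" using D0 by (simp add: c_def)
  have SN: "int S \<in> {- int N..int N}" by (simp add: N_def)
  have inj: "inj_on g {..degree D}" by (auto simp: g_def inj_on_def)
  have img: "g ` {..degree D} \<subseteq> {- int N..int N}" by (auto simp: g_def N_def)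
  have cg: "c (g i) = coeff D i" for i by (simp add: c_def g_def)
  have zero: "c k * a powi k = 0" if k: "k \<in> {- int N..int N} - g ` {..degree D}" for k and a :: complex
  proof (cases "k \<le> int S")
    case True
    define i where "i = nat (int S - k)"
    have "k = g i" using True by (simp add: g_def i_def)
    then have "i > degree D" using k by auto
    then have "coeff D i = 0" by (simp add: coeff_eq_0)
    then show ?thesis using True by (simp add: c_def i_def)
  qed (simp add: c_def)
  have "a ^ S * poly D (1 / a) = (\<Sum>k = - int N..int N. c k * a powi k)" if a: "a \<noteq> 0" for a :: complex
  proof -
    have "a ^ S * poly D (1 / a) = (\<Sum>i\<le>degree D. coeff D i * (a ^ S * (1 / a) ^ i))"
      by (simp add: poly_altdef sum_distrib_left mult_ac)
    also have "\<dots> = (\<Sum>i\<le>degree D. c (g i) * a powi (g i))"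
    proof (rule sum.cong[OF refl])
      fix i
      have "a ^ S * (1 / a) ^ i = a powi (int S - int i)"
        using a by (simp add: power_int_diff power_one_over power_int_of_nat divide_inverse power_inverse)
      then show "coeff D i * (a ^ S * (1 / a) ^ i) = c (g i) * a powi (g i)" by (simp only: cg) (simp add: g_def)
    qed
    also have "\<dots> = (\<Sum>k\<in>g ` {..degree D}. c k * a powi k)"
      by (rule sum.reindex[OF inj, symmetric, unfolded o_def])
    also have "\<dots> = (\<Sum>k = - int N..int N. c k * a powi k)"
      by (rule sum.mono_neutral_left[OF _ img]) (use zero in auto)
    finally show ?thesis .
  qed
  then show ?thesis using cS SN by blast
qed

lemma det_scale:
  fixes f g :: "nat \<Rightarrow> 'a :: comm_ring_1" and h :: "nat \<Rightarrow> nat \<Rightarrow> 'a"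
  shows "det (mat n n (\<lambda>(i,j). f i * g j * h i j)) = (\<Prod>i\<in>{0..<n}. f i) * (\<Prod>j\<in>{0..<n}. g j) * det (mat n n (\<lambda>(i,j). h i j))"
proof -
  let ?F = "(\<Prod>i\<in>{0..<n}. f i) * (\<Prod>j\<in>{0..<n}. g j)"
  have "det (mat n n (\<lambda>(i,j). f i * g j * h i j)) = (\<Sum>p\<in>{p. p permutes {0..<n}}. signof p * (\<Prod>i=0..<n. f i * g (p i) * h i (p i)))"
    by (subst det_def'[of _ n]) (auto intro!: sum.cong prod.cong simp: permutes_in_image)
  also have "\<dots> = (\<Sum>p\<in>{p. p permutes {0..<n}}. ?F * (signof p * (\<Prod>i=0..<n. h i (p i))))"
  proof (rule sum.cong[OF refl])
    fix p assume p: "p \<in> {p. p permutes {0..<n}}"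
    have "(\<Prod>i=0..<n. g (p i)) = (\<Prod>j\<in>{0..<n}. g j)"
      using prod.permute[of p "{0..<n}" g] p by (simp add: o_def)
    then show "signof p * (\<Prod>i=0..<n. f i * g (p i) * h i (p i)) = ?F * (signof p * (\<Prod>i=0..<n. h i (p i)))"
      by (simp add: prod.distrib mult_ac)
  qed
  also have "\<dots> = ?F * det (mat n n (\<lambda>(i,j). h i j))"
    by (subst det_def'[of _ n]) (auto simp: sum_distrib_left permutes_in_image intro!: sum.cong prod.cong)
  finally show ?thesis .
qed

lemma poly_det_hom:
  fixes A :: "complex poly mat"
  shows "det (map_mat (\<lambda>p. poly p x) A) = poly (det A) x"
proof -
  interpret comm_ring_hom "\<lambda>p :: complex poly. poly p x" by unfold_locales auto
  show ?thesis by (rule hom_det)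
qed

lemma inj_pow:
  fixes t :: complex
  assumes "0 < norm t" "norm t < 1"
  shows "inj (\<lambda>k::nat. t ^ k)"
proof (rule injI)
  fix i j :: nat assume "t ^ i = t ^ j"
  then have e: "norm t ^ i = norm t ^ j" by (metis norm_power)
  show "i = j"
  proof (rule ccontr)
    assume "i \<noteq> j"
    then consider "i < j" | "j < i" by linarith
    then show False
      by cases (use e assms power_strict_decreasing_iff[of "norm t"] in \<open>metis less_irrefl\<close>)+
  qed
qed


lemma entry_int:
  fixes q a :: complex and w :: "complex \<Rightarrow> complex" and R :: "complex poly"
  assumes q0: "0 < norm q" and q1: "norm q < 1" and a1: "(norm q)\<^sup>2 < norm a" and a2: "norm a < 1"
    and aq: "a\<^sup>2 \<noteq> q\<^sup>2" and ws: "w_spec q a w"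
  shows "contour_integral (circlepath 0 1) (\<lambda>z. poly R z * w z * z ^ N) =
    (\<Sum>l\<le>degree R. coeff R l * (2 * of_real pi * \<i> * (a ^ (N+l+1) - (q\<^sup>2 / a) ^ (N+l+1)) / (1 - (q\<^sup>2) ^ (N+l+1))))"
proof -
  have "((\<lambda>z. \<Sum>l\<le>degree R. coeff R l * (w z * z^(N+l))) has_contour_integral
     (\<Sum>l\<le>degree R. coeff R l * (2 * of_real pi * \<i> * (a ^ (N+l+1) - (q\<^sup>2 / a) ^ (N+l+1)) / (1 - (q\<^sup>2) ^ (N+l+1))))) (circlepath 0 1)"
    by (intro has_contour_integral_sum has_contour_integral_lmul circ_int[OF assms]) auto
  moreover have "(\<lambda>z. poly R z * w z * z^N) = (\<lambda>z. \<Sum>l\<le>degree R. coeff R l * (w z * z^(N+l)))"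
    by (rule ext) (simp add: poly_altdef sum_distrib_right sum_distrib_left power_add mult_ac)
  ultimately show ?thesis by (simp add: contour_integral_unique)
qed

lemma pw_aux:
  fixes a :: complex
  assumes "a \<noteq> 0"
  shows "a ^ (e + k) * (1 / a) ^ k = a ^ e" "a ^ (e + k) * (1 / a) ^ (2 * e + k) = 1 / a ^ e"
  using assms by (simp_all add: power_add power_one_over power_mult field_simps power2_eq_square)

theorem proposition5p11:
  fixes q :: complex and R :: "complex poly" and m :: nat
    and w :: "complex \<Rightarrow> complex \<Rightarrow> complex"
  assumes "0 < norm q" and "norm q < 1" and "R \<noteq> 0"
    and "\<And>a. (norm q)\<^sup>2 < norm a \<Longrightarrow> norm a < 1 \<Longrightarrow> a\<^sup>2 \<noteq> q\<^sup>2 \<Longrightarrow> w_spec q a (w a)"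
  shows "\<exists>N::nat. \<exists>c::int \<Rightarrow> complex.
           (\<exists>k \<in> {- int N..int N}. c k \<noteq> 0) \<and>
           (\<forall>a. (norm q)\<^sup>2 < norm a \<and> norm a < 1 \<and> a\<^sup>2 \<noteq> q\<^sup>2 \<longrightarrow>
                 det (moment_matrix R (w a) m) = (\<Sum>k = - int N..int N. c k * a powi k))"
proof -
  define t where "t = q\<^sup>2"
  define d where "d = degree R"
  define r where "r = coeff R"
  define n where "n = Suc m"
  define c0 where "c0 = 2 * of_real pi * (\<i>::complex)"
  define \<kappa> where "\<kappa> N = c0 / (1 - t^(N+1))" for N
  define P where "P i j = (\<Sum>l\<le>d. Polynomial.smult (r l * \<kappa> (i+j+l))
      (monom 1 (d - l) - monom (t^(i+j+l+1)) (2*(i+j+l+1) + (d - l))))" for i j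
  define D where "D = det (mat n n (\<lambda>(i,j). P i j))"
  define S where "S = (\<Sum>i\<in>{0..<n}. i) + (\<Sum>j\<in>{0..<n}. j + d + 1)"
  have tn: "norm t = (norm q)\<^sup>2" by (simp add: t_def norm_power)
  have t0: "0 < norm t" using assms(1) by (simp add: tn)
  have t1: "norm t < 1" using assms(1,2) by (simp add: tn power_less_one_iff)
  have tp: "norm (t ^ k) < 1" if "k > 0" for k
    using t0 t1 that by (simp add: norm_power power_less_one_iff)
  have polyP: "poly (P i j) x = (\<Sum>l\<le>d. r l * \<kappa> (i+j+l) * (x ^ (d - l) - t^(i+j+l+1) * x ^ (2*(i+j+l+1) + (d - l))))" for i j x
    by (simp add: P_def poly_sum poly_monom)
  have main: "det (moment_matrix R (w a) m) = a ^ S * poly D (1 / a)"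
    if a: "(norm q)\<^sup>2 < norm a" "norm a < 1" "a\<^sup>2 \<noteq> q\<^sup>2" for a
  proof -
    have a0: "a \<noteq> 0"
    proof
      assume "a = 0" with a(1) assms(1) show False by simp
    qed
    have ws: "w_spec q a (w a)" using assms(4) a by blast
    have ent: "contour_integral (circlepath 0 1) (\<lambda>z. poly R z * w a z * z ^ (i + j))
               = a ^ i * a ^ (j + d + 1) * poly (P i j) (1 / a)" for i j
    proof -
      have "contour_integral (circlepath 0 1) (\<lambda>z. poly R z * w a z * z ^ (i + j)) =
        (\<Sum>l\<le>d. r l * (2 * of_real pi * \<i> * (a ^ (i+j+l+1) - (q\<^sup>2 / a) ^ (i+j+l+1)) / (1 - (q\<^sup>2) ^ (i+j+l+1))))"
        unfolding d_def r_def by (rule entry_int[OF assms(1,2) a ws])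
      also have "\<dots> = (\<Sum>l\<le>d. a ^ i * a ^ (j + d + 1) * (r l * \<kappa> (i+j+l) * ((1/a) ^ (d - l) - t^(i+j+l+1) * (1/a) ^ (2*(i+j+l+1) + (d - l)))))"
      proof (rule sum.cong[OF refl])
        fix l assume l: "l \<in> {..d}"
        define e where "e = i + j + l + 1"
        define k where "k = d - l"
        have ek: "i + (j + d + 1) = e + k" using l by (simp add: e_def k_def)
        have X: "a ^ i * a ^ (j + d + 1) = a ^ (e + k)" by (subst power_add[symmetric], subst ek, rule refl)
        have "a ^ i * a ^ (j + d + 1) * (r l * \<kappa> (i+j+l) * ((1/a) ^ (d - l) - t^(i+j+l+1) * (1/a) ^ (2*(i+j+l+1) + (d - l))))
           = r l * \<kappa> (i+j+l) * (a ^ (e + k) * (1/a) ^ k - t ^ e * (a ^ (e + k) * (1/a) ^ (2*e + k)))"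
          unfolding k_def[symmetric] e_def[symmetric] X by (simp only: right_diff_distrib mult_ac)
        also have "\<dots> = r l * \<kappa> (i+j+l) * (a ^ e - t ^ e / a ^ e)"
          using pw_aux[OF a0, of e k] by simp
        also have "\<dots> = r l * (2 * of_real pi * \<i> * (a ^ (i+j+l+1) - (q\<^sup>2 / a) ^ (i+j+l+1)) / (1 - (q\<^sup>2) ^ (i+j+l+1)))"
          by (simp add: \<kappa>_def c0_def e_def t_def power_divide)
        finally show "r l * (2 * of_real pi * \<i> * (a ^ (i+j+l+1) - (q\<^sup>2 / a) ^ (i+j+l+1)) / (1 - (q\<^sup>2) ^ (i+j+l+1)))
           = a ^ i * a ^ (j + d + 1) * (r l * \<kappa> (i+j+l) * ((1/a) ^ (d - l) - t^(i+j+l+1) * (1/a) ^ (2*(i+j+l+1) + (d - l))))"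
          by simp
      qed
      also have "\<dots> = a ^ i * a ^ (j + d + 1) * poly (P i j) (1 / a)"
        by (simp add: polyP sum_distrib_left)
      finally show ?thesis .
    qed
    have "moment_matrix R (w a) m = mat n n (\<lambda>(i,j). a ^ i * a ^ (j + d + 1) * poly (P i j) (1 / a))"
      unfolding moment_matrix_def n_def
      by (intro arg_cong[where f="mat (Suc m) (Suc m)"] ext) (clarsimp simp: ent split: prod.splits)
    then have "det (moment_matrix R (w a) m) = (\<Prod>i\<in>{0..<n}. a ^ i) * (\<Prod>j\<in>{0..<n}. a ^ (j + d + 1)) * det (mat n n (\<lambda>(i,j). poly (P i j) (1 / a)))"
      using det_scale[where f="\<lambda>i. a ^ i" and g="\<lambda>j. a ^ (j + d + 1)" and h="\<lambda>i j. poly (P i j) (1 / a)" and n=n] by simp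
    also have "det (mat n n (\<lambda>(i,j). poly (P i j) (1 / a))) = poly D (1 / a)"
    proof -
      have "map_mat (\<lambda>p. poly p (1 / a)) (mat n n (\<lambda>(i,j). P i j)) = mat n n (\<lambda>(i,j). poly (P i j) (1 / a))"
        by (rule eq_matI) auto
      then show ?thesis using poly_det_hom[of "1 / a" "mat n n (\<lambda>(i,j). P i j)"] by (simp add: D_def)
    qed
    also have "(\<Prod>i\<in>{0..<n}. a ^ i) * (\<Prod>j\<in>{0..<n}. a ^ (j + d + 1)) = a ^ S"
      by (simp add: S_def power_add power_sum)
    finally show ?thesis .
  qed
  have D0: "coeff D 0 \<noteq> 0"
  proof -
    define K where "K = r d * c0"
    have P0: "poly (P i j) 0 = K / (1 - t ^ i * t ^ (j + (d + 1)))" for i j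
    proof -
      have "poly (P i j) 0 = (\<Sum>l\<le>d. if l = d then r l * \<kappa> (i+j+l) else 0)"
        unfolding polyP by (rule sum.cong[OF refl]) (auto simp: power_0_left)
      also have "\<dots> = r d * \<kappa> (i+j+d)" by simp
      also have "\<dots> = K / (1 - t ^ i * t ^ (j + (d + 1)))"
        by (simp add: K_def \<kappa>_def power_add[symmetric] add_ac)
      finally show ?thesis .
    qed
    have "coeff D 0 = poly D 0" by (simp add: poly_0_coeff_0)
    also have "\<dots> = det (mat n n (\<lambda>(i,j). poly (P i j) 0))"
    proof -
      have "map_mat (\<lambda>p. poly p 0) (mat n n (\<lambda>(i,j). P i j)) = mat n n (\<lambda>(i,j). poly (P i j) 0)"
        by (rule eq_matI) auto
      then show ?thesis using poly_det_hom[of 0 "mat n n (\<lambda>(i,j). P i j)"] by (simp add: D_def)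
    qed
    also have "\<dots> = det (mat n n (\<lambda>(i,j). K / (1 - t ^ i * t ^ (j + (d + 1)))))"
      by (simp add: P0)
    also have "\<dots> \<noteq> 0"
    proof (rule cauchy_nonsing)
      have "r d \<noteq> 0" unfolding r_def d_def using assms(3) by simp
      then show "K \<noteq> 0" by (simp add: K_def c0_def)
      have inj: "inj (\<lambda>k::nat. t ^ k)" by (rule inj_pow[OF t0 t1])
      show "inj_on (\<lambda>i. t ^ i) {0..<n}" using inj by (rule inj_on_subset) simp
      show "inj_on (\<lambda>j. t ^ (j + (d + 1))) {0..<n}"
      proof (rule inj_onI)
        fix x y assume "t ^ (x + (d + 1)) = t ^ (y + (d + 1))"
        then have "x + (d + 1) = y + (d + 1)" using injD[OF inj] by blast
        then show "x = y" by simp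
      qed
      show "t ^ (j + (d + 1)) \<noteq> 0" for j using t0 by auto
      show "1 - t ^ i * t ^ (j + (d + 1)) \<noteq> 0" for i j
      proof -
        have "norm (t ^ i * t ^ (j + (d + 1))) < 1"
          unfolding power_add[symmetric] by (rule tp) simp
        then show ?thesis by auto
      qed
    qed
    finally show ?thesis .
  qed
  obtain N c where Nc: "\<exists>k\<in>{- int N..int N}. c k \<noteq> 0"
    "\<And>a. a \<noteq> 0 \<Longrightarrow> a ^ S * poly D (1 / a) = (\<Sum>k = - int N..int N. c k * a powi k)"
    using laurent_form[OF D0, of S] by blast
  show ?thesis
  proof (intro exI conjI allI impI)
    show "\<exists>k\<in>{- int N..int N}. c k \<noteq> 0" by (rule Nc(1))
    fix a :: complex assume a: "(norm q)\<^sup>2 < norm a \<and> norm a < 1 \<and> a\<^sup>2 \<noteq> q\<^sup>2"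
    have a0: "a \<noteq> 0"
    proof
      assume "a = 0" with a assms(1) show False by simp
    qed
    show "det (moment_matrix R (w a) m) = (\<Sum>k = - int N..int N. c k * a powi k)"
      using main[of a] a Nc(2)[OF a0] by simp
  qed
qed

end
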